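(* Let $a\in[0,\infty)$ and let $\theta:[0,1]\to[0,\infty]$ and $\vartheta:[0,\infty]\to[0,1]$ be continuous and decreasing functions such that $O_{\theta,\vartheta}(x,y)=\vartheta(\theta(x)+\theta(y))$ defines an overlap function $O_{\theta,\vartheta}:[0,1]^2\to[0,1]$, and suppose that at least one of the following holds: (1) $\theta(x)=\frac{a}{2}$ if and only if $x=1$; (2) $\vartheta(x)=1$ if and only if $x\in[0,a]$. Then there exist a pseudo automorphism $\mathcal{F}$ and a t-subnorm $T_{sub}$ such that $O_{\theta,\vartheta}(x,y)=\mathcal{F}(T_{sub}(x,y))$ for all $x,y\in[0,1]$.
   Context: "Decreasing" means non-increasing and "increasing" means non-decreasing. Arithmetic in $[0,\infty]$ uses $c+\infty=\infty$; continuity on $[0,\infty]$ refers to the usual topology of the extended half-line. An overlap function is a map $O:[0,1]^2\to[0,1]$ that is (O1) commutative, (O2) $O(x,y)=0$ iff $xy=0$, (O3) $O(x,y)=1$ iff $xy=1$, (O4) increasing in each variable, (O5) continuous. A pseudo automorphism is a continuous increasing map $\mathcal{F}:[0,1]\to[0,1]$ with $\mathcal{F}(x)=1$ iff $x=1$ and $\mathcal{F}(x)=0$ iff $x=0$. A t-subnorm is a commutative, associative map $T:[0,1]^2\to[0,1]$, increasing in each variable, with $T(x,y)\le\min\{x,y\}$ for all $x,y$. *)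

theory Defs
  imports "HOL-Analysis.Analysis" "HOL-Library.Extended_Nonnegative_Real"
begin

text \<open>The extended half-line [0,\<infinity>] is modelled by the type ennreal
  (addition with c + \<infinity> = \<infinity>, order topology of the extended half-line).
  Maps on [0,1] are total functions real \<Rightarrow> real whose behaviour
  is only constrained on the unit interval.\<close>

definition overlap :: "(real \<Rightarrow> real \<Rightarrow> real) \<Rightarrow> bool" where
  "overlap Ov \<longleftrightarrow>
     (\<forall>x\<in>{0..1}. \<forall>y\<in>{0..1}. Ov x y \<in> {0..1}) \<and>
     (\<forall>x\<in>{0..1}. \<forall>y\<in>{0..1}. Ov x y = Ov y x) \<and>
     (\<forall>x\<in>{0..1}. \<forall>y\<in>{0..1}. Ov x y = 0 \<longleftrightarrow> x * y = 0) \<and>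
     (\<forall>x\<in>{0..1}. \<forall>y\<in>{0..1}. Ov x y = 1 \<longleftrightarrow> x * y = 1) \<and>
     (\<forall>x\<in>{0..1}. \<forall>x'\<in>{0..1}. \<forall>y\<in>{0..1}. x \<le> x' \<longrightarrow> Ov x y \<le> Ov x' y) \<and>
     (\<forall>x\<in>{0..1}. \<forall>y\<in>{0..1}. \<forall>y'\<in>{0..1}. y \<le> y' \<longrightarrow> Ov x y \<le> Ov x y') \<and>
     continuous_on ({0..1} \<times> {0..1}) (\<lambda>(x, y). Ov x y)"

definition pseudo_automorphism :: "(real \<Rightarrow> real) \<Rightarrow> bool" where
  "pseudo_automorphism F \<longleftrightarrow>
     (\<forall>x\<in>{0..1}. F x \<in> {0..1}) \<and>
     continuous_on {0..1} F \<and>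
     mono_on {0..1} F \<and>
     (\<forall>x\<in>{0..1}. F x = 1 \<longleftrightarrow> x = 1) \<and>
     (\<forall>x\<in>{0..1}. F x = 0 \<longleftrightarrow> x = 0)"

definition t_subnorm :: "(real \<Rightarrow> real \<Rightarrow> real) \<Rightarrow> bool" where
  "t_subnorm T \<longleftrightarrow>
     (\<forall>x\<in>{0..1}. \<forall>y\<in>{0..1}. T x y \<in> {0..1}) \<and>
     (\<forall>x\<in>{0..1}. \<forall>y\<in>{0..1}. T x y = T y x) \<and>
     (\<forall>x\<in>{0..1}. \<forall>y\<in>{0..1}. \<forall>z\<in>{0..1}. T (T x y) z = T x (T y z)) \<and>
     (\<forall>x\<in>{0..1}. \<forall>x'\<in>{0..1}. \<forall>y\<in>{0..1}. x \<le> x' \<longrightarrow> T x y \<le> T x' y) \<and>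
     (\<forall>x\<in>{0..1}. \<forall>y\<in>{0..1}. \<forall>y'\<in>{0..1}. y \<le> y' \<longrightarrow> T x y \<le> T x y') \<and>
     (\<forall>x\<in>{0..1}. \<forall>y\<in>{0..1}. T x y \<le> min x y)"

end

theory Submission
  imports Defs
begin

lemma closed_pre:
  fixes f :: "real \<Rightarrow> ennreal"
  assumes "continuous_on {0..1} f" "closed B"
  shows "closed {z\<in>{0..1}. f z \<in> B}"
proof -
  have "closed (f -` B \<inter> {0..1})"
    using assms by (intro continuous_on_closed_vimage[THEN iffD1, rule_format]) auto
  moreover have "f -` B \<inter> {0..1} = {z\<in>{0..1}. f z \<in> B}" by auto
  ultimately show ?thesis by simp
qed

lemma closure_mem:
  fixes f :: "real \<Rightarrow> ennreal"
  assumes "continuous_on {0..1} f" "closed B" "I \<subseteq> {z\<in>{0..1}. f z \<in> B}" "p \<in> closure I"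
  shows "f p \<in> B"
proof -
  have "closure I \<subseteq> {z\<in>{0..1}. f z \<in> B}"
    using closure_minimal[OF assms(3) closed_pre[OF assms(1,2)]] .
  thus ?thesis using assms(4) by auto
qed

definition Tc :: "(real \<Rightarrow> ennreal) \<Rightarrow> real \<Rightarrow> real \<Rightarrow> real" where
  "Tc th x y = Inf {z\<in>{0..1}. th z + th 1 \<le> th x + th y}"

locale thset =
  fixes th :: "real \<Rightarrow> ennreal"
  assumes cont: "continuous_on {0..1} th"
    and dec: "antimono_on {0..1} th"
    and th0: "th 0 = \<infinity>"
    and th1: "th 1 \<noteq> \<infinity>"
begin

lemma ge1: "x \<in> {0..1} \<Longrightarrow> th 1 \<le> th x"
  using dec by (auto simp: monotone_on_def)

lemma contc: "continuous_on {0..1} (\<lambda>z. th z + c)"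
  by (intro continuous_on_add cont continuous_on_const)

lemma key:
  assumes "2 * th 1 \<le> t"
  defines "S \<equiv> {z\<in>{0..1}. th z + th 1 \<le> t}"
  shows "Inf S \<in> {0..1}" "th (Inf S) + th 1 = t"
proof -
  have ne: "1 \<in> S" using assms by (auto simp: mult_2)
  have bdd: "bdd_below S" unfolding S_def by (rule bdd_belowI[of _ 0]) auto
  have cl: "closed S" unfolding S_def
    using closed_pre[OF contc[of "th 1"], of "{..t}"] by auto
  have inS: "Inf S \<in> S" using closed_contains_Inf[OF _ bdd cl] ne by auto
  thus "Inf S \<in> {0..1}" unfolding S_def by auto
  have le: "th (Inf S) + th 1 \<le> t" using inS unfolding S_def by auto
  have "t \<le> th (Inf S) + th 1"
  proof (cases "Inf S = 0")
    case True thus ?thesis by (simp add: th0)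
  next
    case False
    hence pos: "0 < Inf S" using \<open>Inf S \<in> {0..1}\<close> by auto
    have sub: "{0..<Inf S} \<subseteq> {z\<in>{0..1}. th z + th 1 \<in> {t..}}"
    proof
      fix z assume z: "z \<in> {0..<Inf S}"
      hence "z \<notin> S" using cInf_lower[OF _ bdd] by force
      moreover have "z \<in> {0..1}" using z \<open>Inf S \<in> {0..1}\<close> by auto
      ultimately show "z \<in> {z\<in>{0..1}. th z + th 1 \<in> {t..}}" unfolding S_def by auto
    qed
    have "th (Inf S) + th 1 \<in> {t..}"
      using closure_mem[OF contc[of "th 1"] closed_atLeast sub] pos by simp
    thus ?thesis by simp
  qed
  with le show "th (Inf S) + th 1 = t" by simp
qed

lemma Tc_props:
  assumes "x \<in> {0..1}" "y \<in> {0..1}"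
  shows "Tc th x y \<in> {0..1}" "th (Tc th x y) + th 1 = th x + th y"
proof -
  have "2 * th 1 \<le> th x + th y" using ge1 assms by (simp add: mult_2 add_mono)
  from key[OF this] show "Tc th x y \<in> {0..1}" "th (Tc th x y) + th 1 = th x + th y"
    unfolding Tc_def by auto
qed

lemma Tc_le:
  assumes "x \<in> {0..1}" "y \<in> {0..1}"
  shows "Tc th x y \<le> x"
  unfolding Tc_def using assms ge1[OF assms(2)]
  by (intro cInf_lower) (auto intro: add_left_mono bdd_belowI[of _ 0])

lemma Tc_mono:
  assumes "x \<in> {0..1}" "x' \<in> {0..1}" "y \<in> {0..1}" "x \<le> x'"
  shows "Tc th x y \<le> Tc th x' y"
proof -
  have "th x' \<le> th x" using dec assms by (auto simp: monotone_on_def)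
  hence "th x' + th y \<le> th x + th y" by (simp add: add_right_mono)
  hence "{z\<in>{0..1}. th z + th 1 \<le> th x' + th y} \<subseteq> {z\<in>{0..1}. th z + th 1 \<le> th x + th y}"
    using order_trans by blast
  moreover have "{z\<in>{0..1}. th z + th 1 \<le> th x' + th y} \<noteq> {}"
    using Tc_props(2)[OF assms(2,3)] Tc_props(1)[OF assms(2,3)] by (auto intro!: exI[of _ "Tc th x' y"])
  ultimately show ?thesis unfolding Tc_def
    by (intro cInf_superset_mono) (auto intro: bdd_belowI[of _ 0])
qed

lemma Tc_comm: "Tc th x y = Tc th y x"
  unfolding Tc_def by (simp add: add.commute)

lemma Tc_assoc:
  assumes "x \<in> {0..1}" "y \<in> {0..1}" "z \<in> {0..1}"
  shows "Tc th (Tc th x y) z = Tc th x (Tc th y z)"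
proof -
  have a: "th (Tc th x y) + th z + th 1 = th x + th y + th z"
    using Tc_props(2)[OF assms(1,2)] by (metis add.commute add.left_commute)
  have b: "th x + th (Tc th y z) + th 1 = th x + th y + th z"
    using Tc_props(2)[OF assms(2,3)] by (metis add.assoc)
  have "th (Tc th x y) + th z = th x + th (Tc th y z)"
    using a b th1 by (metis ennreal_add_left_cancel add.commute)
  thus ?thesis unfolding Tc_def by simp
qed

end

theorem proposition5p1:
  fixes a :: real and th :: "real \<Rightarrow> ennreal" and vth :: "ennreal \<Rightarrow> real"
  assumes a_nonneg: "0 \<le> a"
    and theta_cont: "continuous_on {0..1} th"
    and theta_dec: "antimono_on {0..1} th"
    and vtheta_range: "\<forall>t. vth t \<in> {0..1}"
    and vtheta_cont: "continuous_on UNIV vth"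
    and vtheta_dec: "antimono vth"
    and ovl: "overlap (\<lambda>x y. vth (th x + th y))"
    and cond: "(\<forall>x\<in>{0..1}. th x = ennreal (a / 2) \<longleftrightarrow> x = 1)
             \<or> (\<forall>t. vth t = 1 \<longleftrightarrow> t \<in> {0..ennreal a})"
  shows "\<exists>F T. pseudo_automorphism F \<and> t_subnorm T \<and>
           (\<forall>x\<in>{0..1}. \<forall>y\<in>{0..1}. vth (th x + th y) = F (T x y))"
proof -
  note O = ovl[unfolded overlap_def]
  have O11: "vth (th 1 + th 1) = 1" using O by auto
  have O01: "vth (th 0 + th 1) = 0" using O by auto
  have O0: "vth (th x + th y) = 0 \<longleftrightarrow> x * y = 0" if "x \<in> {0..1}" "y \<in> {0..1}" for x y
    using O that by blast
  have ge1: "th 1 \<le> th x" if "x \<in> {0..1}" for x using theta_dec that by (auto simp: monotone_on_def)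
  have th1: "th 1 \<noteq> \<infinity>"
  proof
    assume "th 1 = \<infinity>" hence "th 0 = \<infinity>" using ge1[of 0] by (simp add: top_unique[unfolded top_ennreal_def[symmetric]])
    thus False using O11 O01 \<open>th 1 = \<infinity>\<close> by simp
  qed
  have th0: "th 0 = \<infinity>"
  proof (rule ccontr)
    assume nt: "th 0 \<noteq> \<infinity>"
    have sub: "{0<..1} \<subseteq> {z\<in>{0..1}. th z + th z \<in> {..th 0 + th 1}}"
    proof
      fix x :: real assume x: "x \<in> {0<..1}"
      have "\<not> th 0 + th 1 \<le> th x + th x"
      proof
        assume "th 0 + th 1 \<le> th x + th x"
        hence "vth (th x + th x) \<le> vth (th 0 + th 1)" using vtheta_dec by (auto simp: monotone_on_def)
        moreover have "vth (th x + th x) \<noteq> 0" using O0[of x x] x by auto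
        ultimately show False using O01 vtheta_range by (metis atLeastAtMost_iff order.antisym)
      qed
      thus "x \<in> {z\<in>{0..1}. th z + th z \<in> {..th 0 + th 1}}" using x by auto
    qed
    have "th 0 + th 0 \<in> {..th 0 + th 1}"
      using closure_mem[OF continuous_on_add[OF theta_cont theta_cont] closed_atMost sub] by simp
    hence "th 0 \<le> th 1" using nt by (simp add: ennreal_add_left_cancel_le)
    hence "th 0 = th 1" using ge1[of 0] by simp
    thus False using O11 O01 by simp
  qed
  interpret thset th using theta_cont theta_dec th0 th1 by unfold_locales
  define F where "F z = vth (th z + th 1)" for z
  have "pseudo_automorphism F"
    unfolding pseudo_automorphism_def F_def
  proof (intro conjI ballI)
    show "continuous_on {0..1} (\<lambda>x. vth (th x + th 1))"
      by (rule continuous_on_compose2[OF vtheta_cont contc]) auto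
    show "mono_on {0..1} (\<lambda>x. vth (th x + th 1))"
      using O by (auto simp: monotone_on_def)
  qed (use O vtheta_range in auto)
  moreover have "t_subnorm (Tc th)"
  proof -
    have m: "Tc th x y \<le> min x y" if "x \<in> {0..1}" "y \<in> {0..1}" for x y
      using Tc_le[OF that] Tc_le[OF that(2,1)] Tc_comm[of x y] by simp
    show ?thesis unfolding t_subnorm_def
    proof (intro conjI ballI impI)
      fix x y :: real assume "x \<in> {0..1}" "y \<in> {0..1}"
      thus "Tc th x y \<in> {0..1}" "Tc th x y = Tc th y x" "Tc th x y \<le> min x y"
        using Tc_props(1) Tc_comm m by auto
    next
      fix x y z :: real assume "x \<in> {0..1}" "y \<in> {0..1}" "z \<in> {0..1}"
      thus "Tc th (Tc th x y) z = Tc th x (Tc th y z)" by (rule Tc_assoc)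
    next
      fix x x' y :: real assume "x \<in> {0..1}" "x' \<in> {0..1}" "y \<in> {0..1}" "x \<le> x'"
      thus "Tc th x y \<le> Tc th x' y" by (rule Tc_mono)
    next
      fix x y y' :: real assume "x \<in> {0..1}" "y \<in> {0..1}" "y' \<in> {0..1}" "y \<le> y'"
      thus "Tc th x y \<le> Tc th x y'" using Tc_mono[of y y' x] Tc_comm by metis
    qed
  qed
  moreover have "\<forall>x\<in>{0..1}. \<forall>y\<in>{0..1}. vth (th x + th y) = F (Tc th x y)"
    unfolding F_def using Tc_props(2) by simp
  ultimately show ?thesis by blast
qed

end
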